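(* Let $(\mathcal{S},\mathcal{T})$ be an $r$-maximal cross-intersecting pair in $\binom{[n]}{\leq r}$. Then $(\phi^{-1}(\mathcal{S}),\phi^{-1}(\mathcal{T}))$ is a stable cross-intersecting pair of families in $\mathcal{I}_{n,k}^{r}$.
   Context: $\Gamma_{n,k}$ is the disjoint union of $n$ copies of $K_k$, with vertices $(i,j)$, $i\in[n]$, $j\in[k]$; $\mathcal{I}_{n,k}^r$ is the set of its independent sets of size $r$. $\binom{[n]}{\le r}$ is the set of subsets of $[n]$ of size at most $r$. $\phi(X)=\{i:(i,1)\in X\}$ for $X\in\mathcal{I}_{n,k}^r$, and $\phi^{-1}(\mathcal{X})=\{A\in\mathcal{I}_{n,k}^r:\phi(A)\in\mathcal{X}\}$. A pair of non-empty families is cross-intersecting if each member of the first meets each member of the second. A cross-intersecting pair $(\mathcal{S},\mathcal{T})$ in $\binom{[n]}{\le r}$ is $r$-maximal if whenever $(\mathcal{V},\mathcal{W})$ is a cross-intersecting pair in $\binom{[n]}{\le r}$ with $\mathcal{S}\subseteq\mathcal{V}$, $\mathcal{T}\subseteq\mathcal{W}$, then $(\mathcal{V},\mathcal{W})=(\mathcal{S},\mathcal{T})$. For $i\in[n],s\in[2,k]$: $P_{i,s}(X)=(X\setminus\{(i,s)\})\cup\{(i,1)\}$ if $(i,s)\in X$, else $X$; $\pi_{i,s}(\mathcal{F})=\{P_{i,s}(X):X\in\mathcal{F}\}\cup\{X\in\mathcal{F}:P_{i,s}(X)\in\mathcal{F}\}$; a family is stable if $\pi_{i,s}(\mathcal{F})=\mathcal{F}$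 for all $i\in[n],s\in[2,k]$, and a pair is stable if both families are. *)

theory Defs
  imports Main
begin

(* Vertices of Gamma_{n,k} are pairs (i,j) with i in [n] = {1..n}, j in [k] = {1..k};
   two distinct vertices are adjacent iff they lie in the same copy (same i). *)
definition indep_sets :: "nat \<Rightarrow> nat \<Rightarrow> nat \<Rightarrow> (nat \<times> nat) set set" where
  "indep_sets n k r = {X. X \<subseteq> {1..n} \<times> {1..k} \<and> card X = r \<and>
      (\<forall>i j j'. (i, j) \<in> X \<longrightarrow> (i, j') \<in> X \<longrightarrow> j = j')}"

definition small_sets :: "nat \<Rightarrow> nat \<Rightarrow> nat set set" where
  "small_sets n r = {A. A \<subseteq> {1..n} \<and> card A \<le> r}"

definition cross_intersecting :: "'a set set \<Rightarrow> 'a set set \<Rightarrow> bool" where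
  "cross_intersecting F G \<longleftrightarrow> F \<noteq> {} \<and> G \<noteq> {} \<and> (\<forall>A\<in>F. \<forall>B\<in>G. A \<inter> B \<noteq> {})"

definition r_maximal :: "nat \<Rightarrow> nat \<Rightarrow> nat set set \<Rightarrow> nat set set \<Rightarrow> bool" where
  "r_maximal n r S T \<longleftrightarrow>
     S \<subseteq> small_sets n r \<and> T \<subseteq> small_sets n r \<and> cross_intersecting S T \<and>
     (\<forall>V W. V \<subseteq> small_sets n r \<and> W \<subseteq> small_sets n r \<and> cross_intersecting V W \<and>
            S \<subseteq> V \<and> T \<subseteq> W \<longrightarrow> V = S \<and> W = T)"

definition phi :: "(nat \<times> nat) set \<Rightarrow> nat set" where
  "phi X = {i. (i, 1) \<in> X}"

definition phi_inv :: "nat \<Rightarrow> nat \<Rightarrow> nat \<Rightarrow> nat set set \<Rightarrow> (nat \<times> nat) set set" where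
  "phi_inv n k r \<X> = {A \<in> indep_sets n k r. phi A \<in> \<X>}"

definition shiftP :: "nat \<Rightarrow> nat \<Rightarrow> (nat \<times> nat) set \<Rightarrow> (nat \<times> nat) set" where
  "shiftP i s X = (if (i, s) \<in> X then (X - {(i, s)}) \<union> {(i, 1)} else X)"

definition shift_pi :: "nat \<Rightarrow> nat \<Rightarrow> (nat \<times> nat) set set \<Rightarrow> (nat \<times> nat) set set" where
  "shift_pi i s F = (shiftP i s ` F) \<union> {X \<in> F. shiftP i s X \<in> F}"

definition stable :: "nat \<Rightarrow> nat \<Rightarrow> (nat \<times> nat) set set \<Rightarrow> bool" where
  "stable n k F \<longleftrightarrow> (\<forall>i\<in>{1..n}. \<forall>s\<in>{2..k}. shift_pi i s F = F)"

end

theory Submission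
  imports Defs
begin

lemma upS:
  assumes "r_maximal n r S T" "A \<in> S" "A \<subseteq> B" "B \<in> small_sets n r"
  shows "B \<in> S"
proof -
  have ci: "cross_intersecting S T" and m12: "S \<subseteq> small_sets n r" "T \<subseteq> small_sets n r"
    using assms(1) unfolding r_maximal_def by simp_all
  have m: "S \<subseteq> small_sets n r" "T \<subseteq> small_sets n r" "S \<noteq> {}" "T \<noteq> {}"
    "\<forall>A\<in>S. \<forall>B\<in>T. A \<inter> B \<noteq> {}"
    using ci m12 unfolding cross_intersecting_def by blast+
  have m6: "\<And>V W. V \<subseteq> small_sets n r \<Longrightarrow> W \<subseteq> small_sets n r \<Longrightarrow> cross_intersecting V W \<Longrightarrow>
            S \<subseteq> V \<Longrightarrow> T \<subseteq> W \<Longrightarrow> V = S \<and> W = T"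
    using assms(1) unfolding r_maximal_def by blast
  have "\<forall>C\<in>T. B \<inter> C \<noteq> {}" using m(5) assms(2,3) by blast
  hence "cross_intersecting (insert B S) T"
    using m(4,5) unfolding cross_intersecting_def by blast
  moreover have "insert B S \<subseteq> small_sets n r" using assms(4) m(1) by blast
  ultimately have "insert B S = S" using m6[of "insert B S" T] m(2) by blast
  thus ?thesis by blast
qed

lemma upT:
  assumes "r_maximal n r S T" "A \<in> T" "A \<subseteq> B" "B \<in> small_sets n r"
  shows "B \<in> T"
proof -
  have ci: "cross_intersecting S T" and m12: "S \<subseteq> small_sets n r" "T \<subseteq> small_sets n r"
    using assms(1) unfolding r_maximal_def by simp_all
  have m: "S \<subseteq> small_sets n r" "T \<subseteq> small_sets n r" "S \<noteq> {}" "T \<noteq> {}"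
    "\<forall>A\<in>S. \<forall>B\<in>T. A \<inter> B \<noteq> {}"
    using ci m12 unfolding cross_intersecting_def by blast+
  have m6: "\<And>V W. V \<subseteq> small_sets n r \<Longrightarrow> W \<subseteq> small_sets n r \<Longrightarrow> cross_intersecting V W \<Longrightarrow>
            S \<subseteq> V \<Longrightarrow> T \<subseteq> W \<Longrightarrow> V = S \<and> W = T"
    using assms(1) unfolding r_maximal_def by blast
  have "\<forall>C\<in>S. C \<inter> B \<noteq> {}" using m(5) assms(2,3) by blast
  hence "cross_intersecting S (insert B T)"
    using m(3,5) unfolding cross_intersecting_def by blast
  moreover have "insert B T \<subseteq> small_sets n r" using assms(4) m(2) by blast
  ultimately have "insert B T = T" using m6[of S "insert B T"] m(1) by blast
  thus ?thesis by blast
qed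

lemma upward:
  assumes "\<And>A B. A \<in> S \<Longrightarrow> A \<subseteq> B \<Longrightarrow> B \<in> small_sets n r \<Longrightarrow> B \<in> S"
    and "S \<subseteq> small_sets n r" "S \<noteq> {}" "r \<le> n" "1 \<le> k"
  shows "phi_inv n k r S \<noteq> {}"
proof -
  obtain A where A: "A \<in> S" using assms by blast
  hence As: "A \<subseteq> {1..n}" "card A \<le> r" using assms(2) unfolding small_sets_def by auto
  have fA: "finite A" using As finite_subset by blast
  have "r - card A \<le> card ({1..n} - A)"
    using As fA assms(4) by (simp add: card_Diff_subset diff_le_mono)
  then obtain C where C: "C \<subseteq> {1..n} - A" "card C = r - card A" "finite C"
    by (rule obtain_subset_with_card_n)
  define B where "B = A \<union> C"
  have cB: "card B = r" unfolding B_def using C fA As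
    by (subst card_Un_disjoint) auto
  have Bs: "B \<subseteq> {1..n}" unfolding B_def using C As by auto
  have BS: "B \<in> S" using assms(1)[OF A, of B] cB Bs unfolding small_sets_def B_def by auto
  have "B \<times> {1} \<in> phi_inv n k r S"
  proof -
    have "card (B \<times> {1::nat}) = r" using cB by (simp add: card_cartesian_product)
    moreover have "phi (B \<times> {1}) = B" unfolding phi_def by auto
    ultimately show ?thesis using Bs BS assms(5) unfolding phi_inv_def indep_sets_def
      by auto
  qed
  thus ?thesis by blast
qed

lemma stab:
  assumes "\<And>A B. A \<in> S \<Longrightarrow> A \<subseteq> B \<Longrightarrow> B \<in> small_sets n r \<Longrightarrow> B \<in> S"
  shows "stable n k (phi_inv n k r S)"
  unfolding stable_def
proof (intro ballI)
  fix i s assume i: "i \<in> {1..n}" and s: "s \<in> {2..k}"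
  let ?F = "phi_inv n k r S"
  have cl: "shiftP i s X \<in> ?F" if X: "X \<in> ?F" for X
  proof (cases "(i, s) \<in> X")
    case False thus ?thesis using X unfolding shiftP_def by simp
  next
    case True
    have Xs: "X \<subseteq> {1..n} \<times> {1..k}" "card X = r"
      "\<And>i j j'. (i, j) \<in> X \<Longrightarrow> (i, j') \<in> X \<Longrightarrow> j = j'" "phi X \<in> S"
      using X unfolding phi_inv_def indep_sets_def by auto
    have fX: "finite X" using Xs(1) finite_subset by blast
    have n1: "(i, 1) \<notin> X" using Xs(3)[OF True] s by force
    define Y where "Y = insert (i, 1) (X - {(i, s)})"
    have Y: "shiftP i s X = Y" unfolding shiftP_def Y_def using True by auto
    have cY: "card Y = r" unfolding Y_def using fX n1 True Xs(2)
      by (simp add: card_Diff_singleton) (metis One_nat_def Suc_pred card_gt_0_iff empty_iff)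
    have sY: "Y \<subseteq> {1..n} \<times> {1..k}" unfolding Y_def using Xs(1) i s by auto
    have iY: "\<forall>i j j'. (i, j) \<in> Y \<longrightarrow> (i, j') \<in> Y \<longrightarrow> j = j'"
      unfolding Y_def using Xs(3) True by blast
    have pY: "phi Y = insert i (phi X)" unfolding Y_def phi_def using s by auto
    have "phi Y = fst ` (Y \<inter> {p. snd p = 1})" unfolding phi_def by force
    moreover have "finite Y" using fX unfolding Y_def by simp
    ultimately have "card (phi Y) \<le> card (Y \<inter> {p. snd p = 1})" by (simp add: card_image_le)
    also have "\<dots> \<le> card Y" using fX unfolding Y_def by (intro card_mono) auto
    finally have "card (phi Y) \<le> r" using cY by simp
    moreover have "phi Y \<subseteq> {1..n}" using sY unfolding phi_def by auto
    ultimately have "phi Y \<in> small_sets n r" unfolding small_sets_def by auto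
    moreover have "phi X \<subseteq> phi Y" using pY by auto
    ultimately have "phi Y \<in> S" using assms[OF Xs(4)] by blast
    thus ?thesis using Y cY sY iY unfolding phi_inv_def indep_sets_def by auto
  qed
  show "shift_pi i s ?F = ?F" unfolding shift_pi_def using cl by blast
qed

theorem lemma4p5:
  fixes n k r :: nat and S T :: "nat set set"
  assumes "1 \<le> k" and "r \<le> n"
    and "r_maximal n r S T"
  shows "cross_intersecting (phi_inv n k r S) (phi_inv n k r T)
         \<and> stable n k (phi_inv n k r S) \<and> stable n k (phi_inv n k r T)"
proof -
  have m: "S \<subseteq> small_sets n r" "T \<subseteq> small_sets n r" "S \<noteq> {}" "T \<noteq> {}"
    "\<forall>A\<in>S. \<forall>B\<in>T. A \<inter> B \<noteq> {}"
    using assms(3) unfolding r_maximal_def cross_intersecting_def by auto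
  have uS: "\<And>A B. A \<in> S \<Longrightarrow> A \<subseteq> B \<Longrightarrow> B \<in> small_sets n r \<Longrightarrow> B \<in> S"
    using upS[OF assms(3)] by blast
  have uT: "\<And>A B. A \<in> T \<Longrightarrow> A \<subseteq> B \<Longrightarrow> B \<in> small_sets n r \<Longrightarrow> B \<in> T"
    using upT[OF assms(3)] by blast
  have "phi_inv n k r S \<noteq> {}" using upward[OF uS m(1) m(3) assms(2,1)] .
  moreover have "phi_inv n k r T \<noteq> {}" using upward[OF uT m(2) m(4) assms(2,1)] .
  moreover have "\<forall>X\<in>phi_inv n k r S. \<forall>Y\<in>phi_inv n k r T. X \<inter> Y \<noteq> {}"
  proof (intro ballI)
    fix X Y assume "X \<in> phi_inv n k r S" "Y \<in> phi_inv n k r T"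
    hence "phi X \<inter> phi Y \<noteq> {}" using m(5) unfolding phi_inv_def by auto
    thus "X \<inter> Y \<noteq> {}" unfolding phi_def by auto
  qed
  ultimately have "cross_intersecting (phi_inv n k r S) (phi_inv n k r T)"
    unfolding cross_intersecting_def by (intro conjI)
  moreover have "stable n k (phi_inv n k r S)" by (rule stab) (rule uS)
  moreover have "stable n k (phi_inv n k r T)" by (rule stab) (rule uT)
  ultimately show ?thesis by (intro conjI)
qed

end
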